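(* Let $g(x)=\sum_{n\ge 1}\frac{2\,(4n+1)!}{(n+1)!\,(3n+2)!}\,x^n$. Then $g$ satisfies, as a formal power series, the algebraic equation $$x(x^2+11x-1)+(4x^3+25x^2-14x+1)\,g(x)+x(6x^2+17x+3)\,g(x)^2+x^2(4x+3)\,g(x)^3+x^3\,g(x)^4=0.$$ Moreover the series converges at $x=\frac{27}{256}$ and $g\!\left(\frac{27}{256}\right)=\frac{5}{27}$. *)

theory Defs
  imports Complex_Main "HOL-Computational_Algebra.Formal_Power_Series"
begin

definition g_coeff :: "nat \<Rightarrow> real" where
  "g_coeff n = (if n = 0 then 0
     else 2 * fact (4*n+1) / (fact (n+1) * fact (3*n+2)))"

definition g_fps :: "real fps" where
  "g_fps = Abs_fps g_coeff"

end

theory Submission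
  imports Defs
begin

unbundle fps_syntax


lemma exT: "\<exists>S::real fps. S $ 0 = 0 \<and> S = fps_X * (1 + S)^4"
proof -
  define W :: "real fps" where "W = fps_X * inverse ((1 + fps_X)^4)"
  have W0: "W $ 0 = 0" by (simp add: W_def fps_nth_power_0)
  have W1: "W $ 1 = 1" by (simp add: W_def fps_nth_power_0)
  define S where "S = fps_inv W"
  have S0: "S $ 0 = 0" by (simp add: S_def fps_inv_def)
  have "W oo S = fps_X" unfolding S_def by (rule fps_inv_right) (use W0 W1 in auto)
  moreover have "W oo S = S * inverse ((1 + S)^4)"
    unfolding W_def
    by (simp add: fps_compose_mult_distrib[OF S0] fps_inverse_compose[OF S0] fps_compose_power[OF S0, symmetric]
          fps_compose_add_distrib S0)
  ultimately have e: "S * inverse ((1 + S)^4) = fps_X" by simp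
  have "((1 + S)^4) $ 0 \<noteq> 0" using S0 by (simp add: fps_nth_power_0)
  then have "inverse ((1 + S)^4) * (1 + S)^4 = 1" by (rule inverse_mult_eq_1)
  then have "S = fps_X * (1 + S)^4" using e by (metis mult.assoc mult.commute mult_1_right)
  with S0 show ?thesis by blast
qed



definition theta :: "real fps \<Rightarrow> real fps" where "theta F = fps_X * fps_deriv F"

lemma theta_nth: "theta F $ n = of_nat n * F $ n"
  by (cases n) (simp_all add: theta_def)
lemma theta_add[simp]: "theta (F + G) = theta F + theta G" by (simp add: theta_def algebra_simps)
lemma theta_diff[simp]: "theta (F - G) = theta F - theta G" by (simp add: theta_def algebra_simps)
lemma theta_mult[simp]: "theta (F * G) = theta F * G + F * theta G" by (simp add: theta_def algebra_simps)
lemma theta_numeral[simp]: "theta (numeral k) = 0" by (simp add: theta_def)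
lemma theta_one[simp]: "theta 1 = 0" by (simp add: theta_def)
lemma theta_power[simp]: "theta (F ^ Suc n) = of_nat (Suc n) * F ^ n * theta F"
  by (induction n) (simp_all add: algebra_simps)

lemma key:
  fixes T :: "real fps"
  assumes T0: "T $ 0 = 1" and TE: "fps_X * T^4 = T - 1"
  shows "3 * (9 * theta (theta (theta (2*T^2 - T^3))) + 18 * theta (theta (2*T^2 - T^3))
             + 11 * theta (2*T^2 - T^3) + 2 * (2*T^2 - T^3))
         - 4 * fps_X * (64 * theta (theta (theta (2*T^2 - T^3))) + 160 * theta (theta (2*T^2 - T^3))
             + 124 * theta (2*T^2 - T^3) + 30 * (2*T^2 - T^3)) = 6"
proof -
  define U where "U = inverse (4 - 3 * T)"
  have "(4 - 3 * T) $ 0 \<noteq> 0" using T0 by simp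
  then have UE: "U * (4 - 3*T) = 1" unfolding U_def by (rule inverse_mult_eq_1)
  have "fps_deriv (fps_X * T^4) = fps_deriv T" using TE by simp
  then have D: "T^4 + fps_X * (4 * T^3 * fps_deriv T) = fps_deriv T"
    by (simp add: fps_deriv_power algebra_simps flip: fps_numeral_fps_const)
  have D2: "fps_deriv T * (4 - 3*T) = T^5"
  proof -
    have "fps_deriv T * (4 - 3*T) = T * (fps_deriv T - fps_X * (4 * T ^ 3 * fps_deriv T)) + 4 * fps_deriv T * (fps_X * T^4 - (T - 1))"
      by (simp add: algebra_simps numeral_eq_Suc)
    also have "\<dots> = T * (fps_deriv T - fps_X * (4 * T ^ 3 * fps_deriv T))"
      using TE by simp
    also have "\<dots> = T * T^4" using D by (metis add_diff_cancel_right')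
    also have "\<dots> = T^5" by (simp add: numeral_eq_Suc)
    finally show ?thesis .
  qed
  have D3: "fps_deriv T = T^5 * U"
    by (metis D2 UE mult.assoc mult.commute mult_1_right)
  have thT: "theta T = (T - 1) * T * U"
  proof -
    have T5: "T^5 = T^4 * T" by (simp add: numeral_eq_Suc)
    have "theta T = (fps_X * T^4) * T * U" unfolding theta_def D3 T5 by (simp only: mult.assoc)
    then show ?thesis using TE by simp
  qed
  have e1: "theta U * (4 - 3*T) = 3 * U * theta T"
  proof -
    have "theta (U * (4 - 3*T)) = 0" using UE by simp
    then show ?thesis by (simp add: algebra_simps)
  qed
  have thU: "theta U = 3 * (T - 1) * T * U^3"
  proof -
    have "theta U = theta U * (U * (4 - 3*T))" using UE by simp
    also have "\<dots> = U * (theta U * (4 - 3*T))" by (simp add: algebra_simps)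
    also have "\<dots> = 3 * (T - 1) * T * U^3" unfolding e1 thT by (simp add: algebra_simps numeral_eq_Suc)
    finally show ?thesis .
  qed
  have p1: "theta (2*T^2 - T^3) = T^3 - T^2"
  proof -
    have "theta (2*T^2 - T^3) = (T^3 - T^2) * (U * (4 - 3*T))"
      by (simp add: thT numeral_eq_Suc algebra_simps)
    then show ?thesis using UE by simp
  qed
  have p2: "theta (T^3 - T^2) = (3*T^2 - 2*T) * (T - 1) * T * U"
    by (simp add: thT numeral_eq_Suc algebra_simps)
  have p3: "theta ((3*T^2 - 2*T) * (T - 1) * T * U) = 
     (6*T - 2) * ((T - 1) * T * U) * (T - 1) * T * U + (3*T^2 - 2*T) * ((T - 1) * T * U) * T * U
     + (3*T^2 - 2*T) * (T - 1) * ((T - 1) * T * U) * U + (3*T^2 - 2*T) * (T - 1) * T * (3 * (T - 1) * T * U^3)"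
    by (simp add: thT thU numeral_eq_Suc algebra_simps)
  define V where "V = inverse T"
  have TV: "T * V = 1" unfolding V_def by (rule inverse_mult_eq_1') (simp add: T0)
  have Xeq: "fps_X = (T - 1) * V^4"
  proof -
    have "fps_X = fps_X * (T * V)^4" using TV by simp
    also have "\<dots> = (fps_X * T^4) * V^4" by (simp add: power_mult_distrib algebra_simps)
    finally show ?thesis using TE by simp
  qed
  have cert: "3 * (9 * ((6*T - 2) * ((T - 1) * T * U) * (T - 1) * T * U + (3*T^2 - 2*T) * ((T - 1) * T * U) * T * U
     + (3*T^2 - 2*T) * (T - 1) * ((T - 1) * T * U) * U + (3*T^2 - 2*T) * (T - 1) * T * (3 * (T - 1) * T * U^3)) + 18 * ((3*T^2 - 2*T) * (T - 1) * T * U)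
             + 11 * (T^3 - T^2) + 2 * (2*T^2 - T^3))
         - 4 * ((T - 1) * V^4) * (64 * ((6*T - 2) * ((T - 1) * T * U) * (T - 1) * T * U + (3*T^2 - 2*T) * ((T - 1) * T * U) * T * U
     + (3*T^2 - 2*T) * (T - 1) * ((T - 1) * T * U) * U + (3*T^2 - 2*T) * (T - 1) * T * (3 * (T - 1) * T * U^3)) + 160 * ((3*T^2 - 2*T) * (T - 1) * T * U)
             + 124 * (T^3 - T^2) + 30 * (2*T^2 - T^3)) - 6 = (0 - 376 * 1 + 632 * V - 256 * V^2 + 3224 * U - 3712 * U*V + 1280 * U*V^2 - 8224 * U^2 + 5120 * U^2*V - 1024 * U^2*V^2 + 5760 * U^3 - 1536 * U^3*V - 376 * T*V + 632 * T*V^2 - 256 * T*V^3 - 1920 * T*U + 5120 * T*U*V - 4480 * T*U*V^2 + 1280 * T*U*V^3 + 9984 * T*U^2 - 11776 * T*U^2*V + 5888 * T*U^2*V^2 - 1024 * T*U^2*V^3 - 11520 * T*U^3 + 6912 * T*U^3*V - 1536 * T*U^3*V^2 - 376 * T^2*V^2 + 632 * T^2*V^3 - 1920 * T^2*U*V + 5120 * T^2*U*V^2 - 4480 * T^2*U*V^3 - 3072 * T^2*U^2 + 9984 * T^2*U^2*V - 11776 * T^2*U^2*V^2 + 5888 * T^2*U^2*V^3 + 8448 * T^2*U^3 - 11520 * T^2*U^3*V + 6912 * T^2*U^3*V^2 - 1536 * T^2*U^3*V^3 - 376 * T^3*V^3 - 1920 * T^3*U*V^2 + 5120 * T^3*U*V^3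 - 3072 * T^3*U^2*V + 9984 * T^3*U^2*V^2 - 11776 * T^3*U^2*V^3 - 2304 * T^3*U^3 + 8448 * T^3*U^3*V - 11520 * T^3*U^3*V^2 + 6912 * T^3*U^3*V^3 - 1920 * T^4*U*V^3 - 3072 * T^4*U^2*V^2 + 9984 * T^4*U^2*V^3 - 2304 * T^4*U^3*V + 8448 * T^4*U^3*V^2 - 11520 * T^4*U^3*V^3 - 3072 * T^5*U^2*V^3 - 2304 * T^5*U^3*V^2 + 8448 * T^5*U^3*V^3 - 2304 * T^6*U^3*V^3) * (T * V - 1) + (382 * 1 - 632 * V + 256 * V^2 - 1696 * U + 1184 * U*V - 256 * U*V^2 + 1440 * U^2 - 384 * U^2*V + 774 * T*U - 1800 * T*U^2 + 21 * T^2 - 24 * T^2*U + 762 * T^2*U^2 - 27 * T^3 + 99 * T^3*U - 45 * T^3*U^2 - 81 * T^4*U + 108 * T^4*U^2 - 81 * T^5*U^2) * (U * (4 - 3 * T) - 1)"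
    by algebra
  have "3 * (9 * ((6*T - 2) * ((T - 1) * T * U) * (T - 1) * T * U + (3*T^2 - 2*T) * ((T - 1) * T * U) * T * U
     + (3*T^2 - 2*T) * (T - 1) * ((T - 1) * T * U) * U + (3*T^2 - 2*T) * (T - 1) * T * (3 * (T - 1) * T * U^3)) + 18 * ((3*T^2 - 2*T) * (T - 1) * T * U)
             + 11 * (T^3 - T^2) + 2 * (2*T^2 - T^3))
         - 4 * ((T - 1) * V^4) * (64 * ((6*T - 2) * ((T - 1) * T * U) * (T - 1) * T * U + (3*T^2 - 2*T) * ((T - 1) * T * U) * T * U
     + (3*T^2 - 2*T) * (T - 1) * ((T - 1) * T * U) * U + (3*T^2 - 2*T) * (T - 1) * T * (3 * (T - 1) * T * U^3)) + 160 * ((3*T^2 - 2*T) * (T - 1) * T * U)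
             + 124 * (T^3 - T^2) + 30 * (2*T^2 - T^3)) - 6 = 0" using cert by (simp only: TV UE diff_self mult_zero_right add_0_right)
  then have "3 * (9 * ((6*T - 2) * ((T - 1) * T * U) * (T - 1) * T * U + (3*T^2 - 2*T) * ((T - 1) * T * U) * T * U
     + (3*T^2 - 2*T) * (T - 1) * ((T - 1) * T * U) * U + (3*T^2 - 2*T) * (T - 1) * T * (3 * (T - 1) * T * U^3)) + 18 * ((3*T^2 - 2*T) * (T - 1) * T * U)
             + 11 * (T^3 - T^2) + 2 * (2*T^2 - T^3))
         - 4 * ((T - 1) * V^4) * (64 * ((6*T - 2) * ((T - 1) * T * U) * (T - 1) * T * U + (3*T^2 - 2*T) * ((T - 1) * T * U) * T * U
     + (3*T^2 - 2*T) * (T - 1) * ((T - 1) * T * U) * U + (3*T^2 - 2*T) * (T - 1) * T * (3 * (T - 1) * T * U^3)) + 160 * ((3*T^2 - 2*T) * (T - 1) * T * U)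
             + 124 * (T^3 - T^2) + 30 * (2*T^2 - T^3)) = 6" by (simp only: right_minus_eq)
  then show ?thesis unfolding p1 p2 p3 Xeq .
qed



definition hseq :: "nat \<Rightarrow> real" where
  "hseq n = 2 * fact (4*n+1) / (fact (n+1) * fact (3*n+2))"

lemma hseq_rec_aux:
  fixes A B C x :: real
  assumes "A > 0" "B > 0" "C > 0" "x \<ge> 0"
  shows "3 * (x + 2) * (3 * x + 4) * (3 * x + 5) *
     (2 * ((4*x+5)*(4*x+4)*(4*x+3)*(4*x+2)*A) / (((x+2)*B) * ((3*x+5)*(3*x+4)*(3*x+3)*C)))
   = 4 * (4 * x + 5) * (4 * x + 3) * (4 * x + 2) * (2 * A / (B * C))"
proof -
  have n: "x + 2 \<noteq> 0" "3*x+4 \<noteq> 0" "3*x+5 \<noteq> 0" "3*x+3 \<noteq> 0" "B \<noteq> 0" "C \<noteq> 0"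
    using assms by auto
  have d1: "((x+2)*B) * ((3*x+5)*(3*x+4)*(3*x+3)*C) \<noteq> 0" using n by simp
  have d2: "B * C \<noteq> 0" using n by simp
  show ?thesis
    by (simp only: times_divide_eq_right frac_eq_eq[OF d1 d2]) (simp add: algebra_simps)
qed

lemma hseq_rec:
  "3 * (real n + 2) * (3 * real n + 4) * (3 * real n + 5) * hseq (Suc n)
   = 4 * (4 * real n + 5) * (4 * real n + 3) * (4 * real n + 2) * hseq n"
proof -
  have a: "fact (4 * Suc n + 1) = (4*real n+5)*(4*real n+4)*(4*real n+3)*(4*real n+2)* (fact (4*n+1) :: real)"
  proof -
    have "4 * Suc n + 1 = Suc (Suc (Suc (Suc (4*n+1))))" by simp
    then show ?thesis by (simp only: fact_Suc) (simp add: algebra_simps)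
  qed
  have b: "fact (Suc n + 1) = (real n + 2) * (fact (n+1) :: real)"
  proof -
    have "Suc n + 1 = Suc (n + 1)" by simp
    then show ?thesis by (simp only: fact_Suc) (simp add: algebra_simps)
  qed
  have c: "fact (3 * Suc n + 2) = (3*real n+5)*(3*real n+4)*(3*real n+3)* (fact (3*n+2) :: real)"
  proof -
    have "3 * Suc n + 2 = Suc (Suc (Suc (3*n+2)))" by simp
    then show ?thesis by (simp only: fact_Suc) (simp add: algebra_simps)
  qed
  have "hseq (Suc n) = 2 * ((4*real n+5)*(4*real n+4)*(4*real n+3)*(4*real n+2)* fact (4*n+1)) /
     (((real n + 2) * fact (n+1)) * ((3*real n+5)*(3*real n+4)*(3*real n+3)* fact (3*n+2)))"
    unfolding hseq_def a b c by simp
  moreover have "hseq n = 2 * fact (4*n+1) / (fact (n+1) * fact (3*n+2))" by (simp add: hseq_def)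
  ultimately show ?thesis
    using hseq_rec_aux[of "fact (4*n+1)" "fact (n+1)" "fact (3*n+2)" "real n"] by simp
qed

lemma numeral_mult_nth[simp]: "(numeral k * (F :: real fps)) $ n = numeral k * F $ n"
  by (simp add: fps_numeral_fps_const)

declare theta_add[simp del] theta_diff[simp del] theta_mult[simp del] theta_power[simp del]

lemma rec_from_ode:
  fixes F :: "real fps"
  assumes K: "3 * (9 * theta (theta (theta F)) + 18 * theta (theta F) + 11 * theta F + 2 * F)
         - 4 * fps_X * (64 * theta (theta (theta F)) + 160 * theta (theta F)
             + 124 * theta F + 30 * F) = 6"
  shows "3 * (real n + 2) * (3 * real n + 4) * (3 * real n + 5) * F $ Suc n
   = 4 * (4 * real n + 5) * (4 * real n + 3) * (4 * real n + 2) * F $ n"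
proof -
  have "(3 * (9 * theta (theta (theta F)) + 18 * theta (theta F) + 11 * theta F + 2 * F)
         - 4 * fps_X * (64 * theta (theta (theta F)) + 160 * theta (theta F)
             + 124 * theta F + 30 * F)) $ Suc n = (6::real fps) $ Suc n"
    using K by simp
  then have "3 * (9 * theta (theta (theta F)) $ Suc n + 18 * theta (theta F) $ Suc n + 11 * theta F $ Suc n + 2 * F $ Suc n)
         - 4 * (64 * theta (theta (theta F)) $ n + 160 * theta (theta F) $ n
             + 124 * theta F $ n + 30 * F $ n) = 0"
    by (simp add: mult.assoc fps_numeral_nth)
  then have "3 * (9 * real (Suc n)^3 + 18 * real (Suc n)^2 + 11 * real (Suc n) + 2) * F $ Suc n
      - 4 * (64 * real n ^3 + 160 * real n^2 + 124 * real n + 30) * F $ n = 0"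
    by (simp only: theta_nth) (simp add: algebra_simps power2_eq_square power3_eq_cube del: of_nat_Suc)
  then show ?thesis
    by (simp add: algebra_simps power2_eq_square power3_eq_cube)
qed

lemma F_coeff:
  fixes T :: "real fps"
  assumes T0: "T $ 0 = 1" and TE: "fps_X * T^4 = T - 1"
  shows "(2*T^2 - T^3) $ n = hseq n"
proof (induction n)
  case 0
  show ?case using T0 by (simp add: hseq_def fps_nth_power_0)
next
  case (Suc n)
  let ?F = "2*T^2 - T^3"
  have "3 * (real n + 2) * (3 * real n + 4) * (3 * real n + 5) * ?F $ Suc n
   = 4 * (4 * real n + 5) * (4 * real n + 3) * (4 * real n + 2) * ?F $ n"
    by (rule rec_from_ode[OF key[OF T0 TE]])
  then have "3 * (real n + 2) * (3 * real n + 4) * (3 * real n + 5) * ?F $ Suc n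
     = 3 * (real n + 2) * (3 * real n + 4) * (3 * real n + 5) * hseq (Suc n)"
    using hseq_rec[of n] Suc.IH by simp
  moreover have "3 * (real n + 2) * (3 * real n + 4) * (3 * real n + 5) \<noteq> 0"
    by (simp add: add_pos_pos) 
  ultimately show ?case by simp
qed



definition rr :: real where "rr = 27/256"

definition AC :: "real fps \<Rightarrow> bool" where
  "AC F \<longleftrightarrow> summable (\<lambda>n. \<bar>F $ n\<bar> * rr ^ n)"
definition ev :: "real fps \<Rightarrow> real" where
  "ev F = (\<Sum>n. F $ n * rr ^ n)"

lemma rr_pos: "rr > 0" by (simp add: rr_def)

lemma AC_summable: "AC F \<Longrightarrow> summable (\<lambda>n. F $ n * rr ^ n)"
  unfolding AC_def
  by (rule summable_rabs_cancel) (simp add: abs_mult rr_pos less_imp_le)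

lemma AC_add: "AC F \<Longrightarrow> AC G \<Longrightarrow> AC (F + G)"
  unfolding AC_def
proof -
  assume a: "summable (\<lambda>n. \<bar>F $ n\<bar> * rr ^ n)" "summable (\<lambda>n. \<bar>G $ n\<bar> * rr ^ n)"
  show "summable (\<lambda>n. \<bar>(F + G) $ n\<bar> * rr ^ n)"
  proof (rule summable_comparison_test'[OF summable_add[OF a]])
    fix n show "norm (\<bar>(F + G) $ n\<bar> * rr ^ n) \<le> \<bar>F $ n\<bar> * rr ^ n + \<bar>G $ n\<bar> * rr ^ n"
      using rr_pos by (simp add: abs_mult distrib_right[symmetric] abs_triangle_ineq mult_right_mono)
  qed
qed

lemma AC_uminus: "AC F \<Longrightarrow> AC (- F)"
  unfolding AC_def by simp

lemma AC_diff: "AC F \<Longrightarrow> AC G \<Longrightarrow> AC (F - G)"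
  using AC_add[of F "- G"] AC_uminus[of G] by simp

lemma ev_add: "AC F \<Longrightarrow> AC G \<Longrightarrow> ev (F + G) = ev F + ev G"
  unfolding ev_def by (simp add: distrib_right suminf_add[OF AC_summable AC_summable])

lemma ev_uminus: "AC F \<Longrightarrow> ev (- F) = - ev F"
  unfolding ev_def using suminf_minus[OF AC_summable, of F] by simp

lemma ev_diff: "AC F \<Longrightarrow> AC G \<Longrightarrow> ev (F - G) = ev F - ev G"
  using ev_add[of F "- G"] AC_uminus[of G] ev_uminus[of G] by simp

lemma AC_one: "AC 1"
  unfolding AC_def
  by (rule summable_comparison_test'[OF summable_single[of 0 "\<lambda>_. 1"]]) (auto simp: fps_one_nth)

lemma mult_nth_eq: "(F * G) $ k * rr ^ k = (\<Sum>i\<le>k. (F $ i * rr ^ i) * (G $ (k - i) * rr ^ (k - i)))"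
proof -
  have "(F * G) $ k * rr ^ k = (\<Sum>i\<le>k. F $ i * G $ (k - i) * rr ^ k)"
    by (simp add: fps_mult_nth sum_distrib_right atLeast0AtMost)
  also have "\<dots> = (\<Sum>i\<le>k. (F $ i * rr ^ i) * (G $ (k - i) * rr ^ (k - i)))"
  proof (rule sum.cong)
    fix i assume "i \<in> {..k}"
    then have "rr ^ k = rr ^ i * rr ^ (k - i)" by (simp add: power_add[symmetric])
    then show "F $ i * G $ (k - i) * rr ^ k = (F $ i * rr ^ i) * (G $ (k - i) * rr ^ (k - i))"
      by simp
  qed simp
  finally show ?thesis .
qed

lemma AC_mult: "AC F \<Longrightarrow> AC G \<Longrightarrow> AC (F * G)"
  unfolding AC_def
proof -
  assume a: "summable (\<lambda>n. \<bar>F $ n\<bar> * rr ^ n)" "summable (\<lambda>n. \<bar>G $ n\<bar> * rr ^ n)"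
  have s: "summable (\<lambda>k. \<Sum>i\<le>k. (\<bar>F $ i\<bar> * rr ^ i) * (\<bar>G $ (k - i)\<bar> * rr ^ (k - i)))"
    using Cauchy_product_sums[of "\<lambda>n. \<bar>F $ n\<bar> * rr ^ n" "\<lambda>n. \<bar>G $ n\<bar> * rr ^ n"] a rr_pos
    by (simp add: sums_iff abs_mult)
  show "summable (\<lambda>n. \<bar>(F * G) $ n\<bar> * rr ^ n)"
  proof (rule summable_comparison_test'[OF s])
    fix n
    have "norm (\<bar>(F * G) $ n\<bar> * rr ^ n) = \<bar>(F * G) $ n * rr ^ n\<bar>"
      using rr_pos by (simp add: abs_mult)
    also have "\<dots> = \<bar>\<Sum>i\<le>n. (F $ i * rr ^ i) * (G $ (n - i) * rr ^ (n - i))\<bar>"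
      by (simp only: mult_nth_eq)
    also have "\<dots> \<le> (\<Sum>i\<le>n. \<bar>(F $ i * rr ^ i) * (G $ (n - i) * rr ^ (n - i))\<bar>)"
      by (rule sum_abs)
    also have "\<dots> = (\<Sum>i\<le>n. (\<bar>F $ i\<bar> * rr ^ i) * (\<bar>G $ (n - i)\<bar> * rr ^ (n - i)))"
      using rr_pos by (simp add: abs_mult)
    finally show "norm (\<bar>(F * G) $ n\<bar> * rr ^ n) \<le> (\<Sum>i\<le>n. (\<bar>F $ i\<bar> * rr ^ i) * (\<bar>G $ (n - i)\<bar> * rr ^ (n - i)))" .
  qed
qed

lemma ev_mult: "AC F \<Longrightarrow> AC G \<Longrightarrow> ev (F * G) = ev F * ev G"
proof -
  assume a: "AC F" "AC G"
  have n1: "summable (\<lambda>k. norm (F $ k * rr ^ k))" using a(1) rr_pos unfolding AC_def by (simp add: abs_mult)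
  have n2: "summable (\<lambda>k. norm (G $ k * rr ^ k))" using a(2) rr_pos unfolding AC_def by (simp add: abs_mult)
  show ?thesis unfolding ev_def
    using Cauchy_product[OF n1 n2] by (simp only: mult_nth_eq)
qed

lemma AC_power: "AC F \<Longrightarrow> AC (F ^ n)"
proof (induction n)
  case 0
  show ?case using AC_one by simp
next
  case (Suc n) then show ?case by (simp add: AC_mult)
qed

lemma ev_one: "ev 1 = 1"
proof -
  have "(\<lambda>n. (1::real fps) $ n * rr ^ n) = (\<lambda>n. if n = 0 then 1 else 0)" by (auto simp: fps_one_nth)
  then show ?thesis unfolding ev_def using sums_single[of 0 "\<lambda>_. 1::real"] by (simp add: sums_iff)
qed

lemma ev_power: "AC F \<Longrightarrow> ev (F ^ n) = ev F ^ n"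
  by (induction n) (simp_all add: ev_one ev_mult AC_power)

lemma AC_numeral: "AC (numeral k)"
  unfolding AC_def
  by (rule summable_comparison_test'[OF summable_single[of 0 "\<lambda>_. numeral k"]]) (auto simp: fps_numeral_nth)

lemma ev_numeral: "ev (numeral k) = numeral k"
proof -
  have "(\<lambda>n. (numeral k::real fps) $ n * rr ^ n) = (\<lambda>n. if n = 0 then numeral k else 0)" by (auto simp: fps_numeral_nth)
  then show ?thesis unfolding ev_def using sums_single[of 0 "\<lambda>_. numeral k::real"] by (simp add: sums_iff)
qed

lemma AC_X: "AC fps_X"
  unfolding AC_def
  by (rule summable_comparison_test'[OF summable_single[of 1 "\<lambda>_. rr"]]) (auto simp: rr_pos less_imp_le)

lemma ev_X: "ev fps_X = rr"
proof -
  have "(\<lambda>n. (fps_X::real fps) $ n * rr ^ n) = (\<lambda>n. if n = 1 then rr else 0)" by auto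
  then show ?thesis unfolding ev_def using sums_single[of 1 "\<lambda>_. rr"] by (simp add: sums_iff)
qed



lemma quartic_cert:
  fixes T V :: "real fps"
  shows "((T - 1) * V^4) * (((T - 1) * V^4)\<^sup>2 + 11 * ((T - 1) * V^4) - 1)
         + (4 * ((T - 1) * V^4)^3 + 25 * ((T - 1) * V^4)\<^sup>2 - 14 * ((T - 1) * V^4) + 1) * (2*T^2 - T^3 - 1)
         + ((T - 1) * V^4) * (6 * ((T - 1) * V^4)\<^sup>2 + 17 * ((T - 1) * V^4) + 3) * (2*T^2 - T^3 - 1)\<^sup>2
         + ((T - 1) * V^4)\<^sup>2 * (4 * ((T - 1) * V^4) + 3) * (2*T^2 - T^3 - 1)^3
         + ((T - 1) * V^4)^3 * (2*T^2 - T^3 - 1)^4 = (1 + 16 * V^4 + T*V - 16 * T*V^4 + 16 * T*V^5 - 2 * T^2 + T^2*V^2 - 40 * T^2*V^4 - 16 * T^2*V^5 + 16 * T^2*V^6 + T^3 - 2 * T^3*V + T^3*V^3 + 60 * T^3*V^4 - 40 * T^3*V^5 - 16 * T^3*V^6 + 16 * T^3*V^7 + T^4*V - 2 * T^4*V^2 - 7 * T^4*V^4 + 60 * T^4*V^5 - 40 * T^4*V^6 - 16 * T^4*V^7 - 16 * T^4*V^8 + T^5*V^2 - 2 * T^5*V^3 - 24 * T^5*V^4 - 7 * T^5*V^5 + 60 * T^5*V^6 - 40 * T^5*V^7 + 80 * T^5*V^8 - 16 * T^5*V^9 + T^6*V^3 + 13 * T^6*V^4 - 24 * T^6*V^5 -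 7 * T^6*V^6 + 60 * T^6*V^7 - 168 * T^6*V^8 + 80 * T^6*V^9 - 16 * T^6*V^10 - 2 * T^7*V^4 + 13 * T^7*V^5 - 24 * T^7*V^6 - 7 * T^7*V^7 + 192 * T^7*V^8 - 168 * T^7*V^9 + 80 * T^7*V^10 - 16 * T^7*V^11 - 2 * T^8*V^5 + 13 * T^8*V^6 - 24 * T^8*V^7 - 129 * T^8*V^8 + 192 * T^8*V^9 - 168 * T^8*V^10 + 80 * T^8*V^11 - 2 * T^9*V^6 + 13 * T^9*V^7 + 51 * T^9*V^8 - 129 * T^9*V^9 + 192 * T^9*V^10 - 168 * T^9*V^11 - 2 * T^10*V^7 - 11 * T^10*V^8 + 51 * T^10*V^9 - 129 * T^10*V^10 + 192 * T^10*V^11 + T^11*V^8 - 11 * T^11*V^9 + 51 * T^11*V^10 - 129 * T^11*V^11 + T^12*V^9 - 11 * T^12*V^10 + 51 * T^12*V^11 + T^13*V^10 - 11 * T^13*V^11 + T^14*V^11) * (T * V - 1)"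
  by algebra

lemma hseq_pos: "hseq n > 0"
  by (simp add: hseq_def)

lemma poly_ineq:
  fixes x :: real assumes "x \<ge> 0"
  shows "(x+2)^2 * (4 * (4 * x + 5) * (4 * x + 3) * (4 * x + 2)) * (27/256)
     \<le> 3 * (x + 2) * (3 * x + 4) * (3 * x + 5) * (x+1)^2"
proof -
  have "3 * (x + 2) * (3 * x + 4) * (3 * x + 5) * (x+1)^2
     - (x+2)^2 * (4 * (4 * x + 5) * (4 * x + 3) * (4 * x + 2)) * (27/256)
     = (x + 2) * (3/64) * (288 * x^3 + 1316 * x^2 + 1786 * x + 740)"
    by algebra
  moreover have "(x + 2) * (3/64) * (288 * x^3 + 1316 * x^2 + 1786 * x + 740) \<ge> 0"
    using assms by (intro mult_nonneg_nonneg add_nonneg_nonneg) auto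
  ultimately show ?thesis by linarith
qed

lemma a_bound: "(real n + 1)^2 * (hseq n * rr ^ n) \<le> 1"
proof (induction n)
  case 0 show ?case by (simp add: hseq_def)
next
  case (Suc n)
  define x where "x = real n"
  have x0: "x \<ge> 0" by (simp add: x_def)
  define P where "P = 3 * (x + 2) * (3 * x + 4) * (3 * x + 5)"
  have P0: "P > 0" unfolding P_def using x0 by (intro mult_pos_pos) auto
  have rec: "P * hseq (Suc n) = 4 * (4 * x + 5) * (4 * x + 3) * (4 * x + 2) * hseq n"
    unfolding P_def x_def by (rule hseq_rec)
  have an: "hseq n * rr ^ n \<ge> 0" using hseq_pos[of n] rr_pos by simp
  have "P * ((x + 2)^2 * (hseq (Suc n) * rr ^ Suc n))
      = (x+2)^2 * (P * hseq (Suc n)) * rr * rr ^ n" by (simp add: algebra_simps)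
  also have "\<dots> = (x+2)^2 * (4 * (4 * x + 5) * (4 * x + 3) * (4 * x + 2) * hseq n) * rr * rr ^ n"
    by (simp only: rec)
  also have "\<dots> = (x+2)^2 * (4 * (4 * x + 5) * (4 * x + 3) * (4 * x + 2)) * (27/256) * (hseq n * rr ^ n)"
    by (simp add: rr_def algebra_simps)
  also have "\<dots> \<le> P * (x+1)^2 * (hseq n * rr ^ n)"
    unfolding P_def by (rule mult_right_mono[OF poly_ineq[OF x0] an])
  also have "\<dots> \<le> P * 1"
    using Suc.IH P0 unfolding x_def by (simp add: mult.assoc)
  finally have "(x + 2)^2 * (hseq (Suc n) * rr ^ Suc n) \<le> 1"
    using P0 by (simp add: mult_le_cancel_left_pos)
  then show ?case by (simp add: x_def add.commute add.left_commute)
qed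

lemma tele_a1: fixes y :: real assumes "y > 0" shows "inverse y - inverse (y + 1) = 1 / (y * (y + 1))"
  using assms by (simp add: field_simps)

lemma tele_a2: fixes y :: real assumes "y \<ge> 1" shows "1 / y^2 \<le> 2 / (y * (y + 1))"
proof -
  have yy: "y \<le> y * y" using assms mult_left_mono[of 1 y y] by simp
  have h1: "y * (y + 1) \<le> 2 * y^2" using yy by (simp add: power2_eq_square algebra_simps)
  have h3: "0 < 2 * y^2 * (y * (y + 1))" using assms by (intro mult_pos_pos) auto
  have "1 / y^2 = 2 / (2 * y^2)" by simp
  also have "\<dots> \<le> 2 / (y * (y + 1))"
    by (rule divide_left_mono[OF h1 _ h3]) simp
  finally show ?thesis .
qed

lemma tele_aux:
  fixes y :: real assumes y: "y \<ge> 1"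
  shows "1 / y^2 \<le> 2 * (inverse y - inverse (y + 1))"
  using tele_a1[of y] tele_a2[OF y] y by simp

lemma AC_g: "AC g_fps"
proof -
  have t: "summable (\<lambda>n. inverse (real (Suc n)) - inverse (real (Suc (Suc n))))"
    by (rule telescope_summable'[OF LIMSEQ_inverse_real_of_nat])
  have "summable (\<lambda>n. 2 * (inverse (real (Suc n)) - inverse (real (Suc (Suc n)))))"
    using summable_mult[OF t, of 2] by simp
  then show ?thesis unfolding AC_def
  proof (rule summable_comparison_test')
    fix n :: nat
    have ge: "g_fps $ n = g_coeff n" by (simp add: g_fps_def)
    have "\<bar>g_coeff n\<bar> * rr ^ n \<le> hseq n * rr ^ n"
      using hseq_pos[of n] rr_pos by (simp add: g_coeff_def hseq_def)
    also have "\<dots> \<le> 1 / (real n + 1)^2"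
      using a_bound[of n] by (simp add: field_simps)
    also have "\<dots> \<le> 2 * (inverse (real (Suc n)) - inverse (real (Suc (Suc n))))"
      using tele_aux[of "real (Suc n)"] by (simp add: add.commute)
    finally show "norm (\<bar>g_fps $ n\<bar> * rr ^ n) \<le> 2 * (inverse (real (Suc n)) - inverse (real (Suc (Suc n))))"
      using rr_pos by (simp add: ge)
  qed
qed



lemma final_real:
  fixes g :: real
  assumes g0: "g \<ge> 0"
    and E: "rr * (rr^2 + 11 * rr - 1) + (4 * rr^3 + 25 * rr^2 - 14 * rr + 1) * g
         + rr * (6 * rr^2 + 17 * rr + 3) * g^2 + rr^2 * (4 * rr + 3) * g^3 + rr^3 * g^4 = 0"
  shows "g = 5/27"
proof -
  have "rr * (rr^2 + 11 * rr - 1) + (4 * rr^3 + 25 * rr^2 - 14 * rr + 1) * g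
         + rr * (6 * rr^2 + 17 * rr + 3) * g^2 + rr^2 * (4 * rr + 3) * g^3 + rr^3 * g^4
       = rr^3 * ((g - 5/27)^2 * (g^2 + 886/27 * g + 449))"
    unfolding rr_def by algebra
  with E have "rr^3 * ((g - 5/27)^2 * (g^2 + 886/27 * g + 449)) = 0" by simp
  moreover have "rr^3 \<noteq> 0" using rr_pos by simp
  moreover have "g^2 + 886/27 * g + 449 > 0" using g0 by (simp add: add_nonneg_pos)
  ultimately have "(g - 5/27)^2 = 0" by simp
  then show ?thesis by simp
qed

theorem mainTheorem4:
  shows "(fps_X * (fps_X\<^sup>2 + 11 * fps_X - 1)
         + (4 * fps_X^3 + 25 * fps_X\<^sup>2 - 14 * fps_X + 1) * g_fps
         + fps_X * (6 * fps_X\<^sup>2 + 17 * fps_X + 3) * g_fps\<^sup>2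
         + fps_X\<^sup>2 * (4 * fps_X + 3) * g_fps^3
         + fps_X^3 * g_fps^4 = 0)
    \<and> ((\<lambda>n. g_coeff n * (27/256)^n) sums (5/27))"
proof -
  obtain S :: "real fps" where SS: "S $ 0 = 0 \<and> S = fps_X * (1 + S)^4" using exT by (elim exE) (erule that)
  have S0: "S $ 0 = 0" using SS by (rule conjunct1)
  have SE: "S = fps_X * (1 + S)^4" using SS by (rule conjunct2)
  define T where "T = 1 + S"
  have T0: "T $ 0 = 1" using S0 by (simp add: T_def)
  have TE: "fps_X * T^4 = T - 1" using SE by (simp add: T_def)
  have Geq: "g_fps = 2*T^2 - T^3 - 1"
  proof (rule fps_ext)
    fix n
    show "g_fps $ n = (2*T^2 - T^3 - 1) $ n"
      using F_coeff[OF T0 TE, of n] by (cases "n = 0") (simp_all add: g_fps_def g_coeff_def hseq_def fps_one_nth)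
  qed
  define V where "V = inverse T"
  have TV: "T * V = 1" unfolding V_def by (rule inverse_mult_eq_1') (simp add: T0)
  have Xeq: "fps_X = (T - 1) * V^4"
  proof -
    have "fps_X = fps_X * (T * V)^4" using TV by simp
    also have "\<dots> = (fps_X * T^4) * V^4" by (simp add: power_mult_distrib algebra_simps)
    finally show ?thesis using TE by simp
  qed
  have Q: "fps_X * (fps_X\<^sup>2 + 11 * fps_X - 1)
         + (4 * fps_X^3 + 25 * fps_X\<^sup>2 - 14 * fps_X + 1) * g_fps
         + fps_X * (6 * fps_X\<^sup>2 + 17 * fps_X + 3) * g_fps\<^sup>2
         + fps_X\<^sup>2 * (4 * fps_X + 3) * g_fps^3
         + fps_X^3 * g_fps^4 = 0"
    unfolding Geq Xeq quartic_cert TV by simp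

  have AC_rules: "AC g_fps" "AC fps_X" "\<And>k. AC (numeral k)" "AC 1"
    by (simp_all add: AC_g AC_X AC_numeral AC_one)
  have ev0: "ev 0 = 0" by (simp add: ev_def)
  have "ev (fps_X * (fps_X\<^sup>2 + 11 * fps_X - 1)
         + (4 * fps_X^3 + 25 * fps_X\<^sup>2 - 14 * fps_X + 1) * g_fps
         + fps_X * (6 * fps_X\<^sup>2 + 17 * fps_X + 3) * g_fps\<^sup>2
         + fps_X\<^sup>2 * (4 * fps_X + 3) * g_fps^3
         + fps_X^3 * g_fps^4) = 0" using Q ev0 by simp
  then have E: "rr * (rr^2 + 11 * rr - 1) + (4 * rr^3 + 25 * rr^2 - 14 * rr + 1) * ev g_fps
         + rr * (6 * rr^2 + 17 * rr + 3) * (ev g_fps)^2 + rr^2 * (4 * rr + 3) * (ev g_fps)^3 + rr^3 * (ev g_fps)^4 = 0"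
    by (simp only: ev_add ev_diff ev_mult ev_power ev_numeral ev_one ev_X
                  AC_add AC_diff AC_mult AC_power AC_rules)
  have sg: "summable (\<lambda>n. g_coeff n * rr ^ n)"
    using AC_summable[OF AC_g] by (simp add: g_fps_def)
  have "ev g_fps \<ge> 0"
    unfolding ev_def using sg rr_pos
  proof (intro suminf_nonneg)
    fix n
    have "g_coeff n \<ge> 0" by (simp add: g_coeff_def)
    then show "0 \<le> g_fps $ n * rr ^ n" using rr_pos by (simp add: g_fps_def)
  qed (simp add: g_fps_def)
  then have ev5: "ev g_fps = 5/27" using E by (rule final_real)
  have gn: "\<And>n. g_fps $ n = g_coeff n" by (simp add: g_fps_def)
  have s1: "(\<lambda>n. g_coeff n * rr ^ n) sums (\<Sum>n. g_coeff n * rr ^ n)" using sg by (rule summable_sums)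
  have s2: "(\<Sum>n. g_coeff n * rr ^ n) = 5/27" using ev5 unfolding ev_def gn .
  have "(\<lambda>n. g_coeff n * rr ^ n) sums (5/27)" using s1 unfolding s2 .
  then have "(\<lambda>n. g_coeff n * (27/256)^n) sums (5/27)" by (simp add: rr_def)
  with Q show ?thesis by blast
qed


end
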